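(* Let $R$ be a noetherian integral domain, $n\ge1$, and $R[n]=R[t]/(t^n)$. Let $p\ge1$ and, for $1\le i\le p$, let $x_i=\sum_{j=0}^{n-1}x_{i,j}t^j\in R[n]$ with $x_{i,j}\in R$. Let $I$ be the ideal of $R[n]$ generated by $x_1,\ldots,x_p$ and $I_0$ the ideal of $R$ generated by $x_{1,0},\ldots,x_{p,0}$. Then: (i) $(x_1,\ldots,x_p)$ is a regular sequence in $R[n]$ if and only if $(x_{1,0},\ldots,x_{p,0})$ is a regular sequence in $R$; (ii) if $(x_1,\ldots,x_p)$ is a regular sequence in $R[n]$, then for every $y\in R$, $t^{n-1}y\in I$ if and only if $y\in I_0$. *)

theory Defs
  imports "HOL-Computational_Algebra.Polynomial"
begin

definition ideal_gen :: "'a::comm_ring_1 list \<Rightarrow> 'a set" where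
  "ideal_gen xs = {(\<Sum>i<length xs. c i * xs ! i) | c. True}"

definition is_ideal :: "'a::comm_ring_1 set \<Rightarrow> bool" where
  "is_ideal I \<longleftrightarrow> 0 \<in> I \<and> (\<forall>a\<in>I. \<forall>b\<in>I. a + b \<in> I) \<and> (\<forall>r. \<forall>a\<in>I. r * a \<in> I)"

definition noetherian_ring :: "'a::comm_ring_1 itself \<Rightarrow> bool" where
  "noetherian_ring _ \<longleftrightarrow> (\<forall>I::'a set. is_ideal I \<longrightarrow> (\<exists>xs. I = ideal_gen xs))"

text \<open>Regular sequence in the quotient ring A/J, where J = ideal_gen js, expressed
  through representatives in A: each x_i is a non-zero-divisor on
  (A/J)/(x_1,...,x_{i-1}) = A/(J + (x_1,...,x_{i-1})), and
  (A/J)/(x_1,...,x_p) is nonzero.\<close>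
definition regular_seq_mod :: "'a::comm_ring_1 list \<Rightarrow> 'a list \<Rightarrow> bool" where
  "regular_seq_mod js xs \<longleftrightarrow>
     (\<forall>i<length xs. \<forall>f. xs ! i * f \<in> ideal_gen (js @ take i xs) \<longrightarrow> f \<in> ideal_gen (js @ take i xs))
     \<and> 1 \<notin> ideal_gen (js @ xs)"

definition regular_seq :: "'a::comm_ring_1 list \<Rightarrow> bool" where
  "regular_seq xs \<longleftrightarrow> regular_seq_mod [] xs"

end

theory Submission
  imports Defs
begin

lemma ig_intro: "a = (\<Sum>i<length xs. c i * xs ! i) \<Longrightarrow> a \<in> ideal_gen xs"
  unfolding ideal_gen_def by blast

lemma ig_0: "0 \<in> ideal_gen xs"
  unfolding ideal_gen_def by (rule CollectI, rule exI[of _ "\<lambda>_. 0"]) simp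

lemma ig_add: "a \<in> ideal_gen xs \<Longrightarrow> b \<in> ideal_gen xs \<Longrightarrow> a + b \<in> ideal_gen xs"
proof -
  assume "a \<in> ideal_gen xs" "b \<in> ideal_gen xs"
  then obtain c d where "a = (\<Sum>i<length xs. c i * xs ! i)" "b = (\<Sum>i<length xs. d i * xs ! i)"
    unfolding ideal_gen_def by blast
  hence "a + b = (\<Sum>i<length xs. (c i + d i) * xs ! i)"
    by (simp add: sum.distrib distrib_right)
  thus ?thesis by (rule ig_intro)
qed

lemma ig_mult: "a \<in> ideal_gen xs \<Longrightarrow> r * a \<in> ideal_gen xs"
proof -
  assume "a \<in> ideal_gen xs"
  then obtain c where "a = (\<Sum>i<length xs. c i * xs ! i)"
    unfolding ideal_gen_def by blast
  hence "r * a = (\<Sum>i<length xs. (r * c i) * xs ! i)"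
    by (simp add: sum_distrib_left mult.assoc)
  thus ?thesis by (rule ig_intro)
qed

lemma ig_neg: "a \<in> ideal_gen xs \<Longrightarrow> - a \<in> ideal_gen xs"
  using ig_mult[of a xs "-1"] by simp

lemma ig_diff: "a \<in> ideal_gen xs \<Longrightarrow> b \<in> ideal_gen xs \<Longrightarrow> a - b \<in> ideal_gen xs"
  using ig_add[OF _ ig_neg] by (metis diff_conv_add_uminus)

lemma ig_nth: "i < length xs \<Longrightarrow> xs ! i \<in> ideal_gen xs"
proof -
  assume i: "i < length xs"
  have "xs ! i = (\<Sum>j<length xs. (if j = i then 1 else 0) * xs ! j)"
  proof -
    have "(\<Sum>j<length xs. (if j = i then 1 else 0) * xs ! j) = (\<Sum>j<length xs. (if j = i then xs ! i else 0))"
      by (rule sum.cong) auto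
    thus ?thesis using i by simp
  qed
  thus ?thesis by (rule ig_intro)
qed

lemma ig_set: "x \<in> set xs \<Longrightarrow> x \<in> ideal_gen xs"
  by (metis in_set_conv_nth ig_nth)

lemma ig_sum: "(\<And>i. i \<in> A \<Longrightarrow> f i \<in> ideal_gen xs) \<Longrightarrow> sum f A \<in> ideal_gen xs"
proof (induction A rule: infinite_finite_induct)
  case (infinite A) thus ?case by (simp add: ig_0)
next
  case empty thus ?case by (simp add: ig_0)
next
  case (insert x F) thus ?case by (simp add: ig_add)
qed

lemma ig_mono: "set xs \<subseteq> ideal_gen ys \<Longrightarrow> ideal_gen xs \<subseteq> ideal_gen ys"
proof
  fix a assume s: "set xs \<subseteq> ideal_gen ys" and "a \<in> ideal_gen xs"
  then obtain c where a: "a = (\<Sum>i<length xs. c i * xs ! i)"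
    unfolding ideal_gen_def by blast
  show "a \<in> ideal_gen ys" unfolding a
    by (rule ig_sum, rule ig_mult) (use s in auto)
qed

lemma ig_mono_set: "set xs \<subseteq> set ys \<Longrightarrow> ideal_gen xs \<subseteq> ideal_gen ys"
  by (rule ig_mono) (auto intro: ig_set)

lemma ig_snoc: "a \<in> ideal_gen (xs @ [b]) \<Longrightarrow> \<exists>g c. g \<in> ideal_gen xs \<and> a = g + c * b"
proof -
  assume "a \<in> ideal_gen (xs @ [b])"
  then obtain c where a: "a = (\<Sum>i<length (xs @ [b]). c i * (xs @ [b]) ! i)"
    unfolding ideal_gen_def by blast
  have "a = (\<Sum>i<length xs. c i * xs ! i) + c (length xs) * b"
    unfolding a by (simp add: nth_append)
  moreover have "(\<Sum>i<length xs. c i * xs ! i) \<in> ideal_gen xs" by (rule ig_intro) simp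
  ultimately show ?thesis by blast
qed

lemma ig_snoc_in: "g \<in> ideal_gen xs \<Longrightarrow> g + c * b \<in> ideal_gen (xs @ [b])"
  apply (rule ig_add)
  using ig_mono_set[of xs "xs @ [b]"] apply auto[1]
  by (rule ig_mult, rule ig_set, simp)

definition vb :: "nat \<Rightarrow> 'a::zero poly \<Rightarrow> bool" where
  "vb r f \<longleftrightarrow> (\<forall>j<r. coeff f j = 0)"

lemma vb_mult: "vb r a \<Longrightarrow> vb r (a * b) \<and> coeff (a * b) r = coeff a r * coeff b 0"
proof -
  assume v: "vb r a"
  have "vb r (a * b)" unfolding vb_def coeff_mult
    using v unfolding vb_def by (auto intro!: sum.neutral)
  moreover {
  have "coeff (a * b) r = (\<Sum>i\<le>r. coeff a i * coeff b (r - i))" by (rule coeff_mult)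
  also have "\<dots> = coeff a r * coeff b (r - r) + (\<Sum>i\<in>{..r}-{r}. coeff a i * coeff b (r - i))"
    by (rule sum.remove) auto
  also have "(\<Sum>i\<in>{..r}-{r}. coeff a i * coeff b (r - i)) = 0"
    by (rule sum.neutral) (use v in \<open>auto simp: vb_def\<close>)
  finally have "coeff (a * b) r = coeff a r * coeff b 0" by simp }
  ultimately show ?thesis by simp
qed

lemma vb_diff: "vb r a \<Longrightarrow> vb r b \<Longrightarrow> vb r (a - b)"
  unfolding vb_def by simp

lemma vb_add: "vb r a \<Longrightarrow> vb r b \<Longrightarrow> vb r (a + b)"
  unfolding vb_def by simp

lemma vb_le: "vb r a \<Longrightarrow> s \<le> r \<Longrightarrow> vb s a"
  unfolding vb_def by simp

lemma vb_J: "vb n f \<Longrightarrow> f \<in> ideal_gen (monom 1 n # L)"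
proof -
  assume "vb n f"
  hence "monom 1 n dvd f" unfolding vb_def monom_1_dvd_iff' by simp
  then obtain q where "f = q * monom 1 n" by (metis dvd_def mult.commute)
  thus ?thesis by (metis ig_mult ig_nth length_greater_0_conv list.distinct(1) nth_Cons_0)
qed

lemma push:
  fixes h :: "'a::comm_ring_1 poly"
  assumes v: "vb r h" and c: "coeff h r \<in> ideal_gen (map (\<lambda>q. coeff q 0) L)"
  shows "\<exists>g \<in> ideal_gen L. vb (Suc r) (h - g)"
proof -
  obtain c where hc: "coeff h r = (\<Sum>i<length L. c i * (map (\<lambda>q. coeff q 0) L) ! i)"
    using c unfolding ideal_gen_def by auto
  define g where "g = (\<Sum>i<length L. monom (c i) r * L ! i)"
  have "g \<in> ideal_gen L" unfolding g_def by (rule ig_intro) simp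
  moreover have "vb (Suc r) (h - g)" unfolding vb_def
  proof (intro allI impI)
    fix j assume "j < Suc r"
    then consider "j < r" | "j = r" by linarith
    thus "coeff (h - g) j = 0"
    proof cases
      case 1 thus ?thesis using v by (simp add: vb_def g_def coeff_sum coeff_monom_mult)
    next
      case 2 thus ?thesis using hc by (simp add: g_def coeff_sum coeff_monom_mult)
    qed
  qed
  ultimately show ?thesis by blast
qed

lemma ig_Nil: "ideal_gen [] = {0}"
  unfolding ideal_gen_def by simp

lemma I_sub_K: "ideal_gen L \<subseteq> ideal_gen (J # L)"
  by (rule ig_mono_set) auto

lemma str:
  fixes xs :: "'a::comm_ring_1 poly list"
  assumes nzd: "\<forall>i<k. \<forall>c. coeff (xs!i) 0 * c \<in> ideal_gen (map (\<lambda>q. coeff q 0) (take i xs))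
                 \<longrightarrow> c \<in> ideal_gen (map (\<lambda>q. coeff q 0) (take i xs))"
    and k: "k \<le> length xs"
  shows "f \<in> ideal_gen (monom 1 n # take k xs) \<Longrightarrow> vb m f \<Longrightarrow> m < n
     \<Longrightarrow> coeff f m \<in> ideal_gen (map (\<lambda>q. coeff q 0) (take k xs))"
  using nzd k
proof (induction k arbitrary: f m)
  case 0
  then obtain g c where g: "g \<in> ideal_gen []" "f = g + c * monom 1 n"
    using ig_snoc[of f "[]" "monom 1 n"] by auto
  have "vb n (monom 1 n)" by (simp add: vb_def)
  hence "vb n (monom 1 n * c)" using vb_mult by blast
  hence "coeff f m = 0" using g 0 by (simp add: ig_Nil vb_def mult.commute)
  thus ?case by (simp add: ig_0)
next
  case (Suc k)
  define x where "x = xs ! k"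
  define K where "K = ideal_gen (monom 1 n # take k xs)"
  define I where "I = ideal_gen (map (\<lambda>q. coeff q 0) (take k xs))"
  define I' where "I' = ideal_gen (map (\<lambda>q. coeff q 0) (take k xs) @ [coeff x 0])"
  have tk: "take (Suc k) xs = take k xs @ [x]" using Suc.prems(5) by (simp add: x_def take_Suc_conv_app_nth)
  have IH: "\<And>f m. f \<in> K \<Longrightarrow> vb m f \<Longrightarrow> m < n \<Longrightarrow> coeff f m \<in> I"
  proof -
    fix f m assume "f \<in> K" "vb m f" "m < n"
    moreover have "\<forall>i<k. \<forall>c. coeff (xs!i) 0 * c \<in> ideal_gen (map (\<lambda>q. coeff q 0) (take i xs))
                 \<longrightarrow> c \<in> ideal_gen (map (\<lambda>q. coeff q 0) (take i xs))" using Suc.prems(4) by simp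
    moreover have "k \<le> length xs" using Suc.prems(5) by simp
    ultimately show "coeff f m \<in> I" using Suc.IH unfolding K_def I_def by blast
  qed
  have nz: "\<And>c. coeff x 0 * c \<in> I \<Longrightarrow> c \<in> I"
    using Suc.prems(4) unfolding x_def I_def by blast
  have II': "I \<subseteq> I'" unfolding I_def I'_def by (rule ig_mono_set) auto
  have xI': "coeff x 0 \<in> I'" unfolding I'_def by (rule ig_set) auto
  have xK: "\<And>h. h \<in> ideal_gen (take k xs) \<Longrightarrow> h \<in> K" unfolding K_def using I_sub_K by blast
  have fK: "f \<in> ideal_gen ((monom 1 n # take k xs) @ [x])" using Suc.prems(1) tk by simp
  then obtain g a where ga: "g \<in> K" "f = g + a * x" using ig_snoc unfolding K_def by blast
  have vf: "vb m f" "m < n" using Suc.prems by auto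
  have claim: "\<forall>r a'. m + 1 - r = d \<longrightarrow> vb r a' \<longrightarrow> r \<le> m + 1 \<longrightarrow> f - a' * x \<in> K \<longrightarrow> coeff f m \<in> I'" for d
  proof (induction d)
    case 0
    show ?case
    proof (intro allI impI)
      fix r a' assume "m + 1 - r = 0" "vb r a'" "r \<le> m + 1" and fa: "f - a' * x \<in> K"
      hence "vb (m+1) a'" by auto
      hence v: "vb (m+1) (a' * x)" using vb_mult by blast
      have "vb m (f - a' * x)" by (rule vb_diff[OF vf(1)]) (rule vb_le[OF v], simp)
      hence "coeff (f - a' * x) m \<in> I" using IH fa vf by blast
      moreover have "coeff (a' * x) m = 0" using v by (simp add: vb_def)
      ultimately show "coeff f m \<in> I'" using II' by auto
    qed
  next
    case (Suc d)
    show ?case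
    proof (intro allI impI)
      fix r a' assume d: "m + 1 - r = Suc d" and va: "vb r a'" and "r \<le> m + 1" and fa: "f - a' * x \<in> K"
      hence rm: "r \<le> m" by auto
      show "coeff f m \<in> I'"
      proof (cases "coeff a' r \<in> I")
        case True
        then obtain h where h: "h \<in> ideal_gen (take k xs)" "vb (Suc r) (a' - h)"
          using push[OF va] unfolding I_def by blast
        have "f - (a' - h) * x = (f - a' * x) + x * h" by (simp add: algebra_simps)
        also have "\<dots> \<in> K" unfolding K_def
          using ig_add[OF fa[unfolded K_def] ig_mult[OF xK[OF h(1), unfolded K_def]]] .
        finally have "f - (a' - h) * x \<in> K" .
        moreover have "m + 1 - Suc r = d" using d rm by simp
        moreover have "Suc r \<le> m + 1" using rm by simp
        ultimately show ?thesis using Suc.IH[rule_format, of "Suc r" "a' - h"] h(2) by blast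
      next
        case False
        have v: "vb r (a' * x)" "coeff (a' * x) r = coeff a' r * coeff x 0" using vb_mult[OF va] by auto
        have vg: "vb r (f - a' * x)" by (rule vb_diff[OF vb_le[OF vf(1) rm] v(1)])
        have cg: "coeff (f - a' * x) r \<in> I" using IH[OF fa vg] rm vf(2) by simp
        show ?thesis
        proof (cases "r = m")
          case True
          have "coeff f m = coeff (f - a' * x) r + coeff a' r * coeff x 0" using True v by simp
          also have "\<dots> \<in> I'" unfolding I'_def
            by (rule ig_add[OF _ ig_mult[OF xI'[unfolded I'_def]]]) (use cg II' I'_def in blast)
          finally show ?thesis .
        next
          case False
          hence "coeff f r = 0" using vf rm by (simp add: vb_def)
          hence "- (coeff x 0 * coeff a' r) \<in> I" using cg v by (simp add: mult.commute)
          hence "coeff x 0 * coeff a' r \<in> I" using ig_neg[of "- (coeff x 0 * coeff a' r)"] unfolding I_def by simp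
          hence "coeff a' r \<in> I" by (rule nz)
          thus ?thesis using \<open>coeff a' r \<notin> I\<close> by blast
        qed
      qed
    qed
  qed
  have "f - a * x \<in> K" using ga by simp
  moreover have "vb 0 a" by (simp add: vb_def)
  ultimately have "coeff f m \<in> I'" using claim[of "m+1", rule_format, of 0 a] by simp
  thus ?case unfolding I'_def tk by simp
qed

lemma top:
  fixes h :: "'a::comm_ring_1 poly"
  assumes n: "n \<ge> 1" and v: "vb (n - 1) h" and c: "coeff h (n - 1) \<in> ideal_gen (map (\<lambda>q. coeff q 0) L)"
  shows "h \<in> ideal_gen (monom 1 n # L)"
proof -
  obtain g where g: "g \<in> ideal_gen L" "vb (Suc (n - 1)) (h - g)" using push[OF v c] by blast
  have "h - g \<in> ideal_gen (monom 1 n # L)" using g(2) n by (intro vb_J) simp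
  moreover have "g \<in> ideal_gen (monom 1 n # L)" using g(1) I_sub_K by blast
  ultimately show ?thesis using ig_add by fastforce
qed

lemma vb_monom: "vb r (monom c r)"
  by (simp add: vb_def)

lemma lift:
  fixes xs :: "'a::comm_ring_1 poly list"
  assumes nzd: "\<forall>i<Suc k. \<forall>c. coeff (xs!i) 0 * c \<in> ideal_gen (map (\<lambda>q. coeff q 0) (take i xs))
                 \<longrightarrow> c \<in> ideal_gen (map (\<lambda>q. coeff q 0) (take i xs))"
    and k: "k < length xs" and n: "n \<ge> 1"
    and f: "xs ! k * f \<in> ideal_gen (monom 1 n # take k xs)"
  shows "f \<in> ideal_gen (monom 1 n # take k xs)"
proof -
  define x where "x = xs ! k"
  define K where "K = ideal_gen (monom 1 n # take k xs)"
  define I where "I = ideal_gen (map (\<lambda>q. coeff q 0) (take k xs))"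
  have nz: "\<And>c. coeff x 0 * c \<in> I \<Longrightarrow> c \<in> I"
    using nzd unfolding x_def I_def by blast
  have nzd': "\<forall>i<k. \<forall>c. coeff (xs!i) 0 * c \<in> ideal_gen (map (\<lambda>q. coeff q 0) (take i xs))
                 \<longrightarrow> c \<in> ideal_gen (map (\<lambda>q. coeff q 0) (take i xs))" using nzd by simp
  have claim: "r \<le> n \<Longrightarrow> \<exists>f'. f - f' \<in> K \<and> vb r f'" for r
  proof (induction r)
    case 0 show ?case by (rule exI[of _ f]) (simp add: vb_def K_def ig_0)
  next
    case (Suc r)
    then obtain f' where f': "f - f' \<in> K" "vb r f'" by auto
    have "x * f - x * (f - f') \<in> K" unfolding K_def
      by (rule ig_diff, use f x_def in simp, rule ig_mult, use f' K_def in simp)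
    hence xf: "f' * x \<in> K" by (simp add: algebra_simps)
    have v: "vb r (f' * x)" "coeff (f' * x) r = coeff f' r * coeff x 0" using vb_mult[OF f'(2)] by auto
    have "coeff (f' * x) r \<in> I" using str[OF nzd' _ xf[unfolded K_def] v(1)] k Suc.prems unfolding I_def by simp
    hence "coeff f' r \<in> I" using v(2) nz by (simp add: mult.commute)
    then obtain h where h: "h \<in> ideal_gen (take k xs)" "vb (Suc r) (f' - h)"
      using push[OF f'(2)] unfolding I_def by blast
    have "f - (f' - h) = (f - f') + h" by simp
    also have "\<dots> \<in> K" unfolding K_def
      by (rule ig_add, use f' K_def in simp) (use h I_sub_K in blast)
    finally show ?case using h(2) by blast
  qed
  obtain f' where f': "f - f' \<in> K" "vb n f'" using claim[of n] by auto
  have "f' \<in> K" unfolding K_def by (rule vb_J[OF f'(2)])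
  hence "(f - f') + f' \<in> K" using f' ig_add unfolding K_def by blast
  thus ?thesis unfolding K_def by simp
qed

lemma coeff0_mult: "coeff (a * b) 0 = coeff a 0 * coeff (b :: 'a::comm_ring_1 poly) 0"
  by (simp add: coeff_mult)

lemma coeff0:
  fixes f :: "'a::comm_ring_1 poly"
  assumes n: "n \<ge> 1" and f: "f \<in> ideal_gen (monom 1 n # L)"
  shows "coeff f 0 \<in> ideal_gen (map (\<lambda>q. coeff q 0) L)"
proof -
  obtain c where fc: "f = (\<Sum>i<length (monom 1 n # L). c i * (monom 1 n # L) ! i)"
    using f unfolding ideal_gen_def by blast
  have "f = c 0 * monom 1 n + (\<Sum>i<length L. c (Suc i) * L ! i)"
    unfolding fc length_Cons sum.lessThan_Suc_shift by simp
  hence "coeff f 0 = (\<Sum>i<length L. coeff (c (Suc i)) 0 * coeff (L ! i) 0)"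
    using n by (simp add: coeff_sum coeff0_mult)
  also have "\<dots> = (\<Sum>i<length (map (\<lambda>q. coeff q 0) L). coeff (c (Suc i)) 0 * (map (\<lambda>q. coeff q 0) L) ! i)"
    by simp
  finally show ?thesis by (rule ig_intro)
qed

lemma unit_iff:
  fixes L :: "'a::comm_ring_1 poly list"
  assumes n: "n \<ge> 1"
  shows "1 \<in> ideal_gen (monom 1 n # L) \<longleftrightarrow> 1 \<in> ideal_gen (map (\<lambda>q. coeff q 0) L)"
proof
  assume "1 \<in> ideal_gen (monom 1 n # L)"
  from coeff0[OF n this] show "1 \<in> ideal_gen (map (\<lambda>q. coeff q 0) L)" by simp
next
  assume one: "1 \<in> ideal_gen (map (\<lambda>q. coeff q 0) L)"
  have all: "c \<in> ideal_gen (map (\<lambda>q. coeff q 0) L)" for c using ig_mult[OF one, of c] by simp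
  have claim: "\<exists>g \<in> ideal_gen L. vb r (1 - g)" for r
  proof (induction r)
    case 0 show ?case using ig_0 by (auto simp: vb_def)
  next
    case (Suc r)
    then obtain g where g: "g \<in> ideal_gen L" "vb r (1 - g)" by auto
    obtain h where h: "h \<in> ideal_gen L" "vb (Suc r) (1 - g - h)" using push[OF g(2) all] by blast
    have "g + h \<in> ideal_gen L" using g h ig_add by blast
    moreover have "1 - g - h = 1 - (g + h)" by simp
    ultimately show ?case using h(2) by metis
  qed
  obtain g where g: "g \<in> ideal_gen L" "vb n (1 - g)" using claim by blast
  have "1 - g \<in> ideal_gen (monom 1 n # L)" by (rule vb_J[OF g(2)])
  moreover have "g \<in> ideal_gen (monom 1 n # L)" using g(1) I_sub_K by blast
  ultimately have "(1 - g) + g \<in> ideal_gen (monom 1 n # L)" by (rule ig_add)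
  thus "1 \<in> ideal_gen (monom 1 n # L)" by simp
qed

lemma all_Suc: "(\<forall>i<Suc k. P i) \<longleftrightarrow> (\<forall>i<k. P i) \<and> P k"
  by (auto simp: less_Suc_eq)

lemma cond_equiv:
  fixes xs :: "'a::comm_ring_1 poly list"
  assumes nzd: "\<forall>i<k. \<forall>c. coeff (xs!i) 0 * c \<in> ideal_gen (map (\<lambda>q. coeff q 0) (take i xs))
                 \<longrightarrow> c \<in> ideal_gen (map (\<lambda>q. coeff q 0) (take i xs))"
    and k: "k < length xs" and n: "n \<ge> 1"
  shows "(\<forall>f. xs!k * f \<in> ideal_gen (monom 1 n # take k xs) \<longrightarrow> f \<in> ideal_gen (monom 1 n # take k xs))
     \<longleftrightarrow> (\<forall>c. coeff (xs!k) 0 * c \<in> ideal_gen (map (\<lambda>q. coeff q 0) (take k xs))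
                 \<longrightarrow> c \<in> ideal_gen (map (\<lambda>q. coeff q 0) (take k xs)))"
proof
  assume A: "\<forall>f. xs!k * f \<in> ideal_gen (monom 1 n # take k xs) \<longrightarrow> f \<in> ideal_gen (monom 1 n # take k xs)"
  show "\<forall>c. coeff (xs!k) 0 * c \<in> ideal_gen (map (\<lambda>q. coeff q 0) (take k xs))
                 \<longrightarrow> c \<in> ideal_gen (map (\<lambda>q. coeff q 0) (take k xs))"
  proof (intro allI impI)
    fix y assume y: "coeff (xs!k) 0 * y \<in> ideal_gen (map (\<lambda>q. coeff q 0) (take k xs))"
    have v: "vb (n - 1) (monom y (n - 1) * xs ! k)"
      "coeff (monom y (n - 1) * xs ! k) (n - 1) = y * coeff (xs!k) 0"
      using vb_mult[OF vb_monom[of "n - 1" y]] by auto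
    have "monom y (n - 1) * xs ! k \<in> ideal_gen (monom 1 n # take k xs)"
      by (rule top[OF n v(1)]) (use v(2) y in \<open>simp add: mult.commute\<close>)
    hence "monom y (n - 1) \<in> ideal_gen (monom 1 n # take k xs)" using A by (simp add: mult.commute)
    from str[OF nzd _ this vb_monom] k n
    show "y \<in> ideal_gen (map (\<lambda>q. coeff q 0) (take k xs))" by simp
  qed
next
  assume B: "\<forall>c. coeff (xs!k) 0 * c \<in> ideal_gen (map (\<lambda>q. coeff q 0) (take k xs))
                 \<longrightarrow> c \<in> ideal_gen (map (\<lambda>q. coeff q 0) (take k xs))"
  have nzd': "\<forall>i<Suc k. \<forall>c. coeff (xs!i) 0 * c \<in> ideal_gen (map (\<lambda>q. coeff q 0) (take i xs))
                 \<longrightarrow> c \<in> ideal_gen (map (\<lambda>q. coeff q 0) (take i xs))"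
    unfolding all_Suc using nzd B by blast
  show "\<forall>f. xs!k * f \<in> ideal_gen (monom 1 n # take k xs) \<longrightarrow> f \<in> ideal_gen (monom 1 n # take k xs)"
    using lift[OF nzd' k n] by blast
qed

lemma equiv_k:
  fixes xs :: "'a::comm_ring_1 poly list"
  assumes n: "n \<ge> 1"
  shows "k \<le> length xs \<Longrightarrow> (\<forall>i<k. \<forall>f. xs!i * f \<in> ideal_gen (monom 1 n # take i xs) \<longrightarrow> f \<in> ideal_gen (monom 1 n # take i xs))
    \<longleftrightarrow> (\<forall>i<k. \<forall>c. coeff (xs!i) 0 * c \<in> ideal_gen (map (\<lambda>q. coeff q 0) (take i xs))
                 \<longrightarrow> c \<in> ideal_gen (map (\<lambda>q. coeff q 0) (take i xs)))"
proof (induction k)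
  case 0 show ?case by simp
next
  case (Suc k)
  hence IH: "(\<forall>i<k. \<forall>f. xs!i * f \<in> ideal_gen (monom 1 n # take i xs) \<longrightarrow> f \<in> ideal_gen (monom 1 n # take i xs))
    \<longleftrightarrow> (\<forall>i<k. \<forall>c. coeff (xs!i) 0 * c \<in> ideal_gen (map (\<lambda>q. coeff q 0) (take i xs))
                 \<longrightarrow> c \<in> ideal_gen (map (\<lambda>q. coeff q 0) (take i xs)))" by simp
  have k: "k < length xs" using Suc.prems by simp
  show ?case unfolding all_Suc using IH cond_equiv[OF _ k n] by blast
qed

theorem proposition3p7p1:
  fixes x :: "nat \<Rightarrow> nat \<Rightarrow> 'a::idom" and n p :: nat
    and X :: "'a poly list" and X0 :: "'a list"
  assumes noeth: "noetherian_ring TYPE('a)"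
    and n: "n \<ge> 1" and p: "p \<ge> 1"
    and X_def: "X = map (\<lambda>i. \<Sum>j<n. monom (x i j) j) [1..<p+1]"
    and X0_def: "X0 = map (\<lambda>i. x i 0) [1..<p+1]"
  shows "(regular_seq_mod [monom 1 n] X \<longleftrightarrow> regular_seq X0)
    \<and> (regular_seq_mod [monom 1 n] X \<longrightarrow>
         (\<forall>y::'a. monom y (n - 1) \<in> ideal_gen (monom 1 n # X) \<longleftrightarrow> y \<in> ideal_gen X0))"
proof -
  have X0: "X0 = map (\<lambda>q. coeff q 0) X"
    unfolding X0_def X_def using n by (simp add: coeff_sum)
  have R: "regular_seq_mod [monom 1 n] X \<longleftrightarrow>
     (\<forall>i<length X. \<forall>f. X!i * f \<in> ideal_gen (monom 1 n # take i X) \<longrightarrow> f \<in> ideal_gen (monom 1 n # take i X))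
     \<and> 1 \<notin> ideal_gen (monom 1 n # X)"
    unfolding regular_seq_mod_def by simp
  have R0: "regular_seq X0 \<longleftrightarrow>
     (\<forall>i<length X. \<forall>c. coeff (X!i) 0 * c \<in> ideal_gen (map (\<lambda>q. coeff q 0) (take i X))
                 \<longrightarrow> c \<in> ideal_gen (map (\<lambda>q. coeff q 0) (take i X)))
     \<and> 1 \<notin> ideal_gen (map (\<lambda>q. coeff q 0) X)"
    unfolding regular_seq_def regular_seq_mod_def X0 by (simp add: take_map)
  have part1: "regular_seq_mod [monom 1 n] X \<longleftrightarrow> regular_seq X0"
    unfolding R R0 using equiv_k[OF n, of "length X" X] unit_iff[OF n, of X] by simp
  have part2: "monom y (n - 1) \<in> ideal_gen (monom 1 n # X) \<longleftrightarrow> y \<in> ideal_gen X0"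
    if reg: "regular_seq_mod [monom 1 n] X" for y
  proof
    have nzd: "\<forall>i<length X. \<forall>c. coeff (X!i) 0 * c \<in> ideal_gen (map (\<lambda>q. coeff q 0) (take i X))
                 \<longrightarrow> c \<in> ideal_gen (map (\<lambda>q. coeff q 0) (take i X))"
      using reg part1 R0 by blast
    assume "monom y (n - 1) \<in> ideal_gen (monom 1 n # X)"
    hence "monom y (n - 1) \<in> ideal_gen (monom 1 n # take (length X) X)" by simp
    from str[OF nzd _ this vb_monom] n show "y \<in> ideal_gen X0" unfolding X0 by simp
  next
    assume "y \<in> ideal_gen X0"
    thus "monom y (n - 1) \<in> ideal_gen (monom 1 n # X)"
      using top[OF n vb_monom, of y X] unfolding X0 by simp
  qed
  show ?thesis using part1 part2 by blast
qed

end
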